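(* Let $\gamma_{ab}(q)$ be a metric on an $n$-dimensional manifold and $E_0$ a fixed constant, and consider the geodesic equations $\ddot q^a+\Gamma^a_{bc}\dot q^b\dot q^c=0$ subject to the constraint $\gamma_{ab}\dot q^a\dot q^b=2E_0$. Then each of the following is a first integral of this constrained system: Integral 1. For $\ell\ge0$, $$I_{(\ell)1}=\Big(-\sum_{k=1}^{\ell}\frac{t^{2k}}{2k}L_{(2k-1)(a;b)}+C_{(0)ab}\Big)\dot q^a\dot q^b+\sum_{k=1}^{\ell}t^{2k-1}L_{(2k-1)a}\dot q^a+G(q),$$ where $C_{(0)ab}$ is a second order CKT with associated vector $X_{(0)a}$, each $L_{(2k-1)(a;b)}$ ($k=1,\dots,\ell$) is a second order CKT with associated vector $Y_{(2k-1)a}$, and $$E_0Y_{(2\ell-1)a}=0,\qquad E_0Y_{(2k-1)a}=k(2k+1)L_{(2k+1)a}\ (k=1,\dots,\ell-1),\qquad G_{,a}=-2E_0X_{(0)a}-L_{(1)a},$$ where $L_{(1)a}$ is present only if $\ell>0$. Integral 2. For $\ell\ge0$, $$I_{(\ell)2}=\sum_{k=0}^{\ell}\Big(-\frac{t^{2k+1}}{2k+1}L_{(2k)(a;b)}\dot q^a\dot q^b+t^{2k}L_{(2k)a}\dot q^a\Big),$$ where each $L_{(2k)(a;b)}$ ($k=0,\dots,\ell$) is a second order CKT with associated vector $Y_{(2k)a}$ and $$E_0Y_{(2\ell)a}=0,\qquad E_0Y_{(2k)a}=(k+1)(2k+1)L_{(2k+2)a}\ (k=0,\dots,\ell-1).$$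 Integral 3. For a constant $\lambda\ne0$, $$I_{(e)}=e^{\lambda t}\big(-L_{(a;b)}\dot q^a\dot q^b+\lambda L_a\dot q^a\big),$$ where $L_{(a;b)}$ is a second order CKT with associated vector $Y_a$ and $L_a=\frac{2E_0}{\lambda^2}Y_a$.
   Context: $\Gamma^a_{bc}$ are the Levi-Civita connection coefficients of $\gamma_{ab}$; comma = partial derivative, semicolon = covariant derivative, dot = $d/dt$; round brackets denote symmetrization with weight $1/N!$. A first integral of the constrained system is a function $I(t,q,\dot q)$ with $dI/dt=0$ along every geodesic solution satisfying $\gamma_{ab}\dot q^a\dot q^b=2E_0$. A symmetric tensor $U_{ab}$ is a second order conformal Killing tensor (CKT) with associated vector $u_a$ if $U_{(ab;c)}=u_{(a}\gamma_{bc)}$; if $u_a=0$ it is a Killing tensor (KT). *)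

theory Defs
  imports "HOL-Analysis.Analysis"
begin

text \<open>Local coordinate description: the manifold is represented by an open coordinate
  domain U in real^'n (n = CARD('n)); q = (q^a) are coordinates, vectors and covectors
  are given by their components.\<close>

definition pd :: "(real^'n \<Rightarrow> real) \<Rightarrow> 'n \<Rightarrow> real^'n \<Rightarrow> real" where
  "pd f c q = deriv (\<lambda>s. f (q + s *\<^sub>R axis c 1)) 0"

primrec pds :: "'n list \<Rightarrow> (real^'n \<Rightarrow> real) \<Rightarrow> (real^'n \<Rightarrow> real)" where
  "pds [] f = f"
| "pds (c # cs) f = pd (pds cs f) c"

definition smooth_fun :: "(real^'n) set \<Rightarrow> (real^'n \<Rightarrow> real) \<Rightarrow> bool" where
  "smooth_fun U f \<longleftrightarrow> (\<forall>cs. \<forall>q\<in>U. pds cs f differentiable (at q))"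

definition smooth_covec :: "(real^'n) set \<Rightarrow> (real^'n \<Rightarrow> 'n \<Rightarrow> real) \<Rightarrow> bool" where
  "smooth_covec U L \<longleftrightarrow> (\<forall>a. smooth_fun U (\<lambda>q. L q a))"

definition smooth_tensor2 :: "(real^'n) set \<Rightarrow> (real^'n \<Rightarrow> 'n \<Rightarrow> 'n \<Rightarrow> real) \<Rightarrow> bool" where
  "smooth_tensor2 U T \<longleftrightarrow> (\<forall>a b. smooth_fun U (\<lambda>q. T q a b))"

definition is_metric :: "(real^'n) set \<Rightarrow> (real^'n \<Rightarrow> 'n \<Rightarrow> 'n \<Rightarrow> real) \<Rightarrow> bool" where
  "is_metric U g \<longleftrightarrow> open U \<and> smooth_tensor2 U g \<and>
     (\<forall>q\<in>U. (\<forall>a b. g q a b = g q b a) \<and> det (\<chi> i j. g q i j) \<noteq> 0)"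

definition ginv :: "(real^'n \<Rightarrow> 'n \<Rightarrow> 'n \<Rightarrow> real) \<Rightarrow> real^'n \<Rightarrow> 'n \<Rightarrow> 'n \<Rightarrow> real" where
  "ginv g q a b = matrix_inv (\<chi> i j. g q i j) $ a $ b"

definition Gamma :: "(real^'n \<Rightarrow> 'n \<Rightarrow> 'n \<Rightarrow> real) \<Rightarrow> real^'n \<Rightarrow> 'n \<Rightarrow> 'n \<Rightarrow> 'n \<Rightarrow> real" where
  "Gamma g q a b c = (1/2) * (\<Sum>d\<in>UNIV. ginv g q a d *
      (pd (\<lambda>p. g p d b) c q + pd (\<lambda>p. g p d c) b q - pd (\<lambda>p. g p b c) d q))"

definition cov1 :: "(real^'n \<Rightarrow> 'n \<Rightarrow> 'n \<Rightarrow> real) \<Rightarrow> (real^'n \<Rightarrow> 'n \<Rightarrow> real) \<Rightarrow> real^'n \<Rightarrow> 'n \<Rightarrow> 'n \<Rightarrow> real" where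
  "cov1 g L q a b = pd (\<lambda>p. L p a) b q - (\<Sum>c\<in>UNIV. Gamma g q c a b * L q c)"

definition symcov1 :: "(real^'n \<Rightarrow> 'n \<Rightarrow> 'n \<Rightarrow> real) \<Rightarrow> (real^'n \<Rightarrow> 'n \<Rightarrow> real) \<Rightarrow> real^'n \<Rightarrow> 'n \<Rightarrow> 'n \<Rightarrow> real" where
  "symcov1 g L q a b = (cov1 g L q a b + cov1 g L q b a) / 2"

definition cov2 :: "(real^'n \<Rightarrow> 'n \<Rightarrow> 'n \<Rightarrow> real) \<Rightarrow> (real^'n \<Rightarrow> 'n \<Rightarrow> 'n \<Rightarrow> real) \<Rightarrow> real^'n \<Rightarrow> 'n \<Rightarrow> 'n \<Rightarrow> 'n \<Rightarrow> real" where
  "cov2 g C q a b c = pd (\<lambda>p. C p a b) c q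
      - (\<Sum>d\<in>UNIV. Gamma g q d a c * C q d b) - (\<Sum>d\<in>UNIV. Gamma g q d b c * C q a d)"

definition sym3 :: "('n \<Rightarrow> 'n \<Rightarrow> 'n \<Rightarrow> real) \<Rightarrow> 'n \<Rightarrow> 'n \<Rightarrow> 'n \<Rightarrow> real" where
  "sym3 T a b c = (T a b c + T a c b + T b a c + T b c a + T c a b + T c b a) / 6"

definition is_CKT :: "(real^'n) set \<Rightarrow> (real^'n \<Rightarrow> 'n \<Rightarrow> 'n \<Rightarrow> real) \<Rightarrow>
     (real^'n \<Rightarrow> 'n \<Rightarrow> 'n \<Rightarrow> real) \<Rightarrow> (real^'n \<Rightarrow> 'n \<Rightarrow> real) \<Rightarrow> bool" where
  "is_CKT U g T u \<longleftrightarrow> (\<forall>q\<in>U. (\<forall>a b. T q a b = T q b a) \<and>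
      (\<forall>a b c. sym3 (cov2 g T q) a b c = sym3 (\<lambda>x y z. u q x * g q y z) a b c))"

definition first_integral :: "(real^'n) set \<Rightarrow> (real^'n \<Rightarrow> 'n \<Rightarrow> 'n \<Rightarrow> real) \<Rightarrow> real \<Rightarrow>
     (real \<Rightarrow> real^'n \<Rightarrow> real^'n \<Rightarrow> real) \<Rightarrow> bool" where
  "first_integral U g E0 I \<longleftrightarrow>
    (\<forall>(J::real set) (q::real \<Rightarrow> real^'n) v acc. open J \<and>
       (\<forall>t\<in>J. q t \<in> U \<and> (q has_vector_derivative v t) (at t) \<and>
               (v has_vector_derivative acc t) (at t) \<and>
               (\<forall>a. acc t $ a + (\<Sum>b\<in>UNIV. \<Sum>c\<in>UNIV. Gamma g (q t) a b c * v t $ b * v t $ c) = 0) \<and>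
               (\<Sum>a\<in>UNIV. \<Sum>b\<in>UNIV. g (q t) a b * v t $ a * v t $ b) = 2 * E0)
     \<longrightarrow> (\<forall>t\<in>J. ((\<lambda>s. I s (q s) (v s)) has_real_derivative 0) (at t)))"

end

theory Submission
  imports Defs
begin


lemma differentiable_prod_at:
  fixes f :: "'i \<Rightarrow> 'a::real_normed_vector \<Rightarrow> real"
  assumes "finite I" "\<And>i. i \<in> I \<Longrightarrow> f i differentiable (at x)"
  shows "(\<lambda>p. \<Prod>i\<in>I. f i p) differentiable (at x)"
  using assms by (induction I rule: finite_induct) auto

lemma det_differentiable:
  assumes "\<And>i j. (\<lambda>p. f p i j) differentiable (at x)"
  shows "(\<lambda>p. det ((\<chi> i j. f p i j) :: real^'n^'n)) differentiable (at x)"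
proof -
  have "(\<lambda>p. \<Sum>s\<in>{s. s permutes (UNIV::'n set)}. of_int (sign s) * (\<Prod>i\<in>UNIV. f p i (s i))) differentiable (at x)"
    by (intro differentiable_sum differentiable_mult differentiable_const differentiable_prod_at ballI
        finite_permutations assms) auto
  then show ?thesis by (simp add: det_def)
qed

lemma matrix_inv_cramer:
  fixes A :: "real^'n^'n"
  assumes "det A \<noteq> 0"
  shows "matrix_inv A $ a $ b = det (\<chi> i j. if j = a then axis b 1 $ i else A$i$j) / det A"
proof -
  have inv: "invertible A" using assms invertible_det_nz by blast
  have "A ** matrix_inv A = mat 1"
    using inv unfolding invertible_def matrix_inv_def by (rule someI_ex[THEN conjunct1])
  define x where "x = matrix_inv A *v axis b 1"
  have "A *v x = axis b 1"
    unfolding x_def by (simp add: matrix_vector_mul_assoc \<open>A ** matrix_inv A = mat 1\<close>)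
  then have "x = (\<chi> k. det(\<chi> i j. if j=k then axis b 1$i else A$i$j) / det A)"
    using cramer[OF assms] by blast
  then have "x $ a = det (\<chi> i j. if j = a then axis b 1 $ i else A$i$j) / det A" by simp
  moreover have "x $ a = matrix_inv A $ a $ b"
    unfolding x_def by (simp add: matrix_vector_mult_basis column_def)
  ultimately show ?thesis by simp
qed

lemma smooth_fun_diff: "smooth_fun U f \<Longrightarrow> q \<in> U \<Longrightarrow> f differentiable (at q)"
  unfolding smooth_fun_def by (metis pds.simps(1))

lemma smooth_fun_pd_diff: "smooth_fun U f \<Longrightarrow> q \<in> U \<Longrightarrow> pd f c differentiable (at q)"
  unfolding smooth_fun_def by (metis pds.simps)

lemma metric_g_diff: "is_metric U g \<Longrightarrow> q \<in> U \<Longrightarrow> (\<lambda>p. g p a b) differentiable (at q)"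
  unfolding is_metric_def smooth_tensor2_def by (blast intro: smooth_fun_diff)

lemma metric_pdg_diff: "is_metric U g \<Longrightarrow> q \<in> U \<Longrightarrow> pd (\<lambda>p. g p a b) c differentiable (at q)"
  unfolding is_metric_def smooth_tensor2_def by (blast intro: smooth_fun_pd_diff)

lemma ginv_diff:
  assumes m: "is_metric U g" and q: "q \<in> U"
  shows "(\<lambda>p. ginv g p a b) differentiable (at q)"
proof -
  define A where "A p = ((\<chi> i j. g p i j) :: real^'a^'a)" for p
  define h where "h p = det ((\<chi> i j. if j = a then axis b 1 $ i else A p $ i $ j) :: real^'a^'a) / det (A p)" for p
  have gd: "\<And>i j. (\<lambda>p. g p i j) differentiable (at q)" using metric_g_diff[OF m q] .
  have "h differentiable (at q)"
    unfolding h_def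
    apply (intro differentiable_divide)
    subgoal apply (rule det_differentiable) subgoal for i j by (cases "j = a") (simp_all add: A_def gd) done
    subgoal using det_differentiable[of "\<lambda>p i j. g p i j", OF gd] by (simp add: A_def)
    using m q by (simp add: A_def is_metric_def)
  then obtain h' where h': "(h has_derivative h') (at q)" unfolding differentiable_def by blast
  have eq: "\<And>p. p \<in> U \<Longrightarrow> h p = ginv g p a b"
  proof -
    fix p assume "p \<in> U"
    then have "det (A p) \<noteq> 0" using m by (simp add: is_metric_def A_def)
    then show "h p = ginv g p a b"
      unfolding h_def ginv_def A_def[symmetric] by (simp add: matrix_inv_cramer)
  qed
  have "((\<lambda>p. ginv g p a b) has_derivative h') (at q)"
    by (rule has_derivative_transform_within_open[OF h' _ q eq]) (use m in \<open>auto simp: is_metric_def\<close>)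
  then show ?thesis unfolding differentiable_def by blast
qed

lemma Gamma_diff:
  assumes m: "is_metric U g" and q: "q \<in> U"
  shows "(\<lambda>p. Gamma g p a b c) differentiable (at q)"
proof -
  have gi: "\<And>d. (\<lambda>p. ginv g p a d) differentiable (at q)" using ginv_diff[OF m q] .
  have pg: "\<And>x y z. pd (\<lambda>p. g p x y) z differentiable (at q)" using metric_pdg_diff[OF m q] .
  show ?thesis unfolding Gamma_def
    by (intro differentiable_mult differentiable_const differentiable_sum ballI differentiable_add
      differentiable_diff gi pg finite)
qed

lemma cov1_diff:
  assumes m: "is_metric U g" and q: "q \<in> U" and L: "smooth_covec U L"
  shows "(\<lambda>p. cov1 g L p a b) differentiable (at q)"
proof -
  have sf: "\<And>a. smooth_fun U (\<lambda>q. L q a)" using L unfolding smooth_covec_def by blast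
  have l0: "\<And>a. (\<lambda>p. L p a) differentiable (at q)" using smooth_fun_diff[OF sf q] .
  have l1: "\<And>a c. pd (\<lambda>p. L p a) c differentiable (at q)" using smooth_fun_pd_diff[OF sf q] .
  have gm: "\<And>x y z. (\<lambda>p. Gamma g p x y z) differentiable (at q)" using Gamma_diff[OF m q] .
  show ?thesis unfolding cov1_def
    by (intro differentiable_mult differentiable_sum ballI differentiable_diff gm l0 l1 finite)
qed

lemma symcov1_diff:
  assumes m: "is_metric U g" and q: "q \<in> U" and L: "smooth_covec U L"
  shows "(\<lambda>p. symcov1 g L p a b) differentiable (at q)"
proof -
  have c: "\<And>x y. (\<lambda>p. cov1 g L p x y) differentiable (at q)" using cov1_diff[OF m q L] .
  show ?thesis unfolding symcov1_def
    by (intro differentiable_divide differentiable_add c differentiable_const) auto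
qed

lemma pd_chain:
  fixes F :: "real^'n \<Rightarrow> real"
  assumes F: "F differentiable (at (q t))" and qd: "(q has_vector_derivative v) (at t)"
  shows "((\<lambda>s. F (q s)) has_real_derivative (\<Sum>c\<in>UNIV. pd F c (q t) * v$c)) (at t)"
proof -
  obtain F' where F': "(F has_derivative F') (at (q t))" using F unfolding differentiable_def by blast
  have lin: "linear F'" using F' has_derivative_linear by blast
  have pd: "pd F c (q t) = F' (axis c 1)" for c
  proof -
    have "((\<lambda>s. q t + s *\<^sub>R axis c 1) has_derivative (\<lambda>s. s *\<^sub>R axis c 1)) (at 0)"
      by (auto intro!: derivative_eq_intros)
    from has_derivative_compose[OF this] F'
    have "((\<lambda>s. F (q t + s *\<^sub>R axis c 1)) has_derivative (\<lambda>s. F' (s *\<^sub>R axis c 1))) (at 0)"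
      by (simp add: o_def)
    moreover have "(\<lambda>s. F' (s *\<^sub>R axis c 1)) = (\<lambda>s. F' (axis c 1) * s)"
      using lin by (simp add: linear_scale mult.commute)
    ultimately have "((\<lambda>s. F (q t + s *\<^sub>R axis c 1)) has_real_derivative F' (axis c 1)) (at 0)"
      by (simp add: has_field_derivative_def)
    then show ?thesis unfolding pd_def by (rule DERIV_imp_deriv)
  qed
  have "(q has_derivative (\<lambda>s. s *\<^sub>R v)) (at t)" using qd by (simp add: has_vector_derivative_def)
  from has_derivative_compose[OF this F']
  have "((\<lambda>s. F (q s)) has_derivative (\<lambda>s. F' (s *\<^sub>R v))) (at t)" by (simp add: o_def)
  moreover have "F' v = (\<Sum>c\<in>UNIV. pd F c (q t) * v$c)"
  proof -
    have "F' v = F' (\<Sum>c\<in>UNIV. v$c *\<^sub>R axis c 1)"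
      using basis_expansion[of v] by (simp add: scalar_mult_eq_scaleR)
    also have "\<dots> = (\<Sum>c\<in>UNIV. v$c * F' (axis c 1))"
      using lin by (simp add: linear_sum linear_scale)
    finally show ?thesis by (simp add: pd mult.commute)
  qed
  moreover have "(\<lambda>s. F' (s *\<^sub>R v)) = (\<lambda>s. F' v * s)"
    using lin by (simp add: linear_scale mult.commute)
  ultimately show ?thesis
    by (simp add: has_field_derivative_def)
qed

lemma vec_comp_deriv:
  assumes "(v has_vector_derivative w) (at t)"
  shows "((\<lambda>s. v s $ a) has_real_derivative w $ a) (at t)"
proof -
  have "(v has_derivative (\<lambda>x. x *\<^sub>R w)) (at t)" using assms by (simp add: has_vector_derivative_def)
  from bounded_linear.has_derivative[OF bounded_linear_vec_nth this]
  have "((\<lambda>s. v s $ a) has_derivative (\<lambda>x. (x *\<^sub>R w) $ a)) (at t)" .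
  moreover have "(\<lambda>x. (x *\<^sub>R w) $ a) = (\<lambda>x. w $ a * x)" by (auto simp: mult.commute)
  ultimately show ?thesis by (simp add: has_field_derivative_def)
qed

lemma sym3_contract:
  fixes W :: "'n::finite \<Rightarrow> 'n \<Rightarrow> 'n \<Rightarrow> real"
  shows "(\<Sum>a\<in>UNIV. \<Sum>b\<in>UNIV. \<Sum>c\<in>UNIV. sym3 W a b c * x$a * x$b * x$c)
       = (\<Sum>a\<in>UNIV. \<Sum>b\<in>UNIV. \<Sum>c\<in>UNIV. W a b c * x$a * x$b * x$c)"
proof -
  define S where "S W' = (\<Sum>a\<in>UNIV. \<Sum>b\<in>UNIV. \<Sum>c\<in>UNIV. W' a b c * x$a * x$b * x$c)" for W' :: "'n \<Rightarrow> 'n \<Rightarrow> 'n \<Rightarrow> real"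
  have swbc: "S (\<lambda>a b c. W' a c b) = S W'" for W'
    unfolding S_def by (rule sum.cong[OF refl], subst sum.swap) (simp add: ac_simps)
  have swab: "S (\<lambda>a b c. W' b a c) = S W'" for W'
    unfolding S_def by (subst sum.swap) (simp add: ac_simps)
  have lhs: "(\<Sum>a\<in>UNIV. \<Sum>b\<in>UNIV. \<Sum>c\<in>UNIV. sym3 W a b c * x$a * x$b * x$c)
     = (S (\<lambda>a b c. W a b c) + S (\<lambda>a b c. W a c b) + S (\<lambda>a b c. W b a c) + S (\<lambda>a b c. W b c a)
        + S (\<lambda>a b c. W c a b) + S (\<lambda>a b c. W c b a)) / 6"
    unfolding S_def sym3_def by (simp add: sum.distrib sum_divide_distrib[symmetric] algebra_simps add_divide_distrib)
  have e1: "S (\<lambda>a b c. W a c b) = S W" by (rule swbc)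
  have e2: "S (\<lambda>a b c. W b a c) = S W" by (rule swab)
  have e3: "S (\<lambda>a b c. W b c a) = S W"
    using swab[of "\<lambda>a b c. W a c b"] swbc[of W] by simp
  have e4: "S (\<lambda>a b c. W c a b) = S W"
    using swbc[of "\<lambda>a b c. W b a c"] swab[of W] by simp
  have e5: "S (\<lambda>a b c. W c b a) = S W"
    using swab[of "\<lambda>a b c. W c a b"] e4 by simp
  show ?thesis using lhs e1 e2 e3 e4 e5 by (simp add: S_def)
qed

lemma CKT_contract:
  assumes "is_CKT U g T u" "q \<in> U"
  shows "(\<Sum>a\<in>UNIV. \<Sum>b\<in>UNIV. \<Sum>c\<in>UNIV. cov2 g T q a b c * x$a * x$b * x$c)
       = (\<Sum>a\<in>UNIV. u q a * x$a) * (\<Sum>b\<in>UNIV. \<Sum>c\<in>UNIV. g q b c * x$b * x$c)"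
proof -
  have "(\<Sum>a\<in>UNIV. \<Sum>b\<in>UNIV. \<Sum>c\<in>UNIV. cov2 g T q a b c * x$a * x$b * x$c)
     = (\<Sum>a\<in>UNIV. \<Sum>b\<in>UNIV. \<Sum>c\<in>UNIV. sym3 (cov2 g T q) a b c * x$a * x$b * x$c)"
    by (rule sym3_contract[symmetric])
  also have "\<dots> = (\<Sum>a\<in>UNIV. \<Sum>b\<in>UNIV. \<Sum>c\<in>UNIV. sym3 (\<lambda>x y z. u q x * g q y z) a b c * x$a * x$b * x$c)"
    using assms unfolding is_CKT_def by simp
  also have "\<dots> = (\<Sum>a\<in>UNIV. \<Sum>b\<in>UNIV. \<Sum>c\<in>UNIV. u q a * g q b c * x$a * x$b * x$c)"
    by (rule sym3_contract)
  also have "\<dots> = (\<Sum>a\<in>UNIV. u q a * x$a) * (\<Sum>b\<in>UNIV. \<Sum>c\<in>UNIV. g q b c * x$b * x$c)"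
    by (simp add: sum_distrib_right) (simp add: sum_distrib_left ac_simps)
  finally show ?thesis .
qed

lemma cov1_sym_contract:
  "(\<Sum>a\<in>UNIV. \<Sum>b\<in>UNIV. symcov1 g L q a b * x$a * x$b) = (\<Sum>a\<in>UNIV. \<Sum>b\<in>UNIV. cov1 g L q a b * x$a * x$b)"
proof -
  have "(\<Sum>a\<in>UNIV. \<Sum>b\<in>UNIV. cov1 g L q b a * x$a * x$b) = (\<Sum>a\<in>UNIV. \<Sum>b\<in>UNIV. cov1 g L q a b * x$a * x$b)"
    by (subst sum.swap) (simp add: ac_simps)
  then show ?thesis
    unfolding symcov1_def by (simp add: sum.distrib add_divide_distrib distrib_right sum_divide_distrib[symmetric])
qed




lemma int2_alg:
  fixes A S P :: "nat \<Rightarrow> real" and E0 t :: real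
  assumes last: "E0 * A l = 0"
    and rec: "\<And>k. k < l \<Longrightarrow> E0 * A k = (real k + 1) * (2 * real k + 1) * P (k + 1)"
  shows "(\<Sum>k=0..l. - (t^(2*k+1) / (2 * real k + 1)) * (2 * E0 * A k)
            + - (real (2*k+1) * t^(2*k+1 - Suc 0) / (2 * real k + 1)) * S k
            + (t^(2*k) * S k + real (2*k) * t^(2*k - Suc 0) * P k)) = 0"
proof -
  define U where "U k = - (t^(2*k+1) / (2 * real k + 1)) * (2 * (E0 * A k))" for k
  define W where "W k = real (2*k) * t^(2*k - Suc 0) * P k" for k
  have T: "- (t^(2*k+1) / (2 * real k + 1)) * (2 * E0 * A k)
            + - (real (2*k+1) * t^(2*k+1 - Suc 0) / (2 * real k + 1)) * S k
            + (t^(2*k) * S k + real (2*k) * t^(2*k - Suc 0) * P k) = U k + W k" for k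
  proof -
    have "real (2*k+1) * t^(2*k+1 - Suc 0) / (2 * real k + 1) = t^(2*k)"
      by (simp add: field_simps)
    then show ?thesis unfolding U_def W_def by (simp add: algebra_simps)
  qed
  have "{0..l} = {..<Suc l}" by auto
  then have "(\<Sum>k=0..l. - (t^(2*k+1) / (2 * real k + 1)) * (2 * E0 * A k)
            + - (real (2*k+1) * t^(2*k+1 - Suc 0) / (2 * real k + 1)) * S k
            + (t^(2*k) * S k + real (2*k) * t^(2*k - Suc 0) * P k)) = (\<Sum>k<Suc l. U k) + (\<Sum>k<Suc l. W k)"
    unfolding \<open>{0..l} = {..<Suc l}\<close> by (simp only: T sum.distrib)
  also have "(\<Sum>k<Suc l. U k) = (\<Sum>k<l. - (2 * (real k + 1)) * t^(2*k+1) * P (k+1))"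
  proof -
    have "(\<Sum>k<Suc l. U k) = (\<Sum>k<l. U k)" using last by (simp add: U_def)
    also have "\<dots> = (\<Sum>k<l. - (2 * (real k + 1)) * t^(2*k+1) * P (k+1))"
    proof (rule sum.cong[OF refl])
      fix k assume "k \<in> {..<l}"
      then have "E0 * A k = (real k + 1) * (2 * real k + 1) * P (k + 1)" using rec by auto
      moreover have "2 * real k + 1 \<noteq> 0" by (simp add: add_pos_nonneg)
      ultimately show "U k = - (2 * (real k + 1)) * t^(2*k+1) * P (k+1)"
        unfolding U_def by (simp add: field_simps)
    qed
    finally show ?thesis .
  qed
  also have "(\<Sum>k<Suc l. W k) = (\<Sum>k<l. (2 * (real k + 1)) * t^(2*k+1) * P (k+1))"
    by (simp only: sum.lessThan_Suc_shift) (simp add: W_def algebra_simps)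
  also have "(\<Sum>k<l. - (2 * (real k + 1)) * t^(2*k+1) * P (k+1)) + (\<Sum>k<l. (2 * (real k + 1)) * t^(2*k+1) * P (k+1)) = 0"
    by (simp only: sum.distrib[symmetric]) (rule sum.neutral, auto simp: algebra_simps)
  finally show ?thesis .
qed

lemma int1_alg:
  fixes A S P :: "nat \<Rightarrow> real" and E0 t :: real
  assumes last: "l \<ge> 1 \<Longrightarrow> E0 * A l = 0"
    and rec: "\<And>k. k \<in> {1..<l} \<Longrightarrow> E0 * A k = real k * (2 * real k + 1) * P (k + 1)"
  shows "- (\<Sum>k=1..l. t^(2*k) / (2 * real k) * (2 * E0 * A k) + real (2*k) * t^(2*k - Suc 0) / (2 * real k) * S k)
     + (\<Sum>k=1..l. t^(2*k-1) * S k + real (2*k-1) * t^(2*k-1 - Suc 0) * P k)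
     - (if l > 0 then P 1 else 0) = 0"
proof (cases l)
  case 0
  then show ?thesis by simp
next
  case (Suc m)
  have c: "real (2*k) * t^(2*k - Suc 0) / (2 * real k) = t^(2*k-1)" if "k \<ge> 1" for k
    using that by simp
  have "(\<Sum>k=1..l. t^(2*k) / (2 * real k) * (2 * E0 * A k) + real (2*k) * t^(2*k - Suc 0) / (2 * real k) * S k)
     = (\<Sum>k=1..l. t^(2*k) / (2 * real k) * (2 * E0 * A k)) + (\<Sum>k=1..l. t^(2*k-1) * S k)"
    by (simp add: sum.distrib c)
  moreover have "(\<Sum>k=1..l. t^(2*k-1) * S k + real (2*k-1) * t^(2*k-1 - Suc 0) * P k)
     = (\<Sum>k=1..l. t^(2*k-1) * S k) + (\<Sum>k=1..l. real (2*k-1) * t^(2*k-1 - Suc 0) * P k)"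
    by (simp add: sum.distrib)
  moreover have "(\<Sum>k=1..l. t^(2*k) / (2 * real k) * (2 * E0 * A k)) = (\<Sum>j<m. (2 * real j + 3) * t^(2*j+2) * P (j+2))"
  proof -
    have "(\<Sum>k=1..l. t^(2*k) / (2 * real k) * (2 * E0 * A k)) = (\<Sum>j<Suc m. t^(2*Suc j) / (2 * real (Suc j)) * (2 * E0 * A (Suc j)))"
      unfolding Suc using sum.atLeast1_atMost_eq[of "\<lambda>k. t^(2*k) / (2 * real k) * (2 * E0 * A k)" "Suc m"] by simp
    also have "\<dots> = (\<Sum>j<m. t^(2*Suc j) / (2 * real (Suc j)) * (2 * E0 * A (Suc j)))"
      using last Suc by simp
    also have "\<dots> = (\<Sum>j<m. (2 * real j + 3) * t^(2*j+2) * P (j+2))"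
    proof (rule sum.cong[OF refl])
      fix j assume "j \<in> {..<m}"
      then have "Suc j \<in> {1..<l}" using Suc by auto
      then have "E0 * A (Suc j) = real (Suc j) * (2 * real (Suc j) + 1) * P (j + 2)" using rec by fastforce
      then have e: "E0 * A (Suc j) = real (Suc j) * (2 * real (Suc j) + 1) * P (j + 2)" .
      have "t^(2*Suc j) / (2 * real (Suc j)) * (2 * E0 * A (Suc j)) = t^(2*Suc j) / real (Suc j) * (E0 * A (Suc j))"
        by (simp add: field_simps)
      also have "\<dots> = t^(2*Suc j) / real (Suc j) * (real (Suc j) * (2 * real (Suc j) + 1) * P (j + 2))"
        by (simp only: e)
      also have "\<dots> = (2 * real j + 3) * t^(2*j+2) * P (j+2)"
        by (simp add: field_simps)
      finally show "t^(2*Suc j) / (2 * real (Suc j)) * (2 * E0 * A (Suc j)) = (2 * real j + 3) * t^(2*j+2) * P (j+2)" .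
    qed
    finally show ?thesis .
  qed
  moreover have "(\<Sum>k=1..l. real (2*k-1) * t^(2*k-1 - Suc 0) * P k) = P 1 + (\<Sum>j<m. (2 * real j + 3) * t^(2*j+2) * P (j+2))"
  proof -
    have "(\<Sum>k=1..l. real (2*k-1) * t^(2*k-1 - Suc 0) * P k) = (\<Sum>j<Suc m. real (2*Suc j-1) * t^(2*Suc j-1 - Suc 0) * P (Suc j))"
      unfolding Suc using sum.atLeast1_atMost_eq[of "\<lambda>k. real (2*k-1) * t^(2*k-1 - Suc 0) * P k" "Suc m"] by simp
    also have "\<dots> = P 1 + (\<Sum>j<m. real (2*Suc (Suc j)-1) * t^(2*Suc (Suc j)-1 - Suc 0) * P (Suc (Suc j)))"
      by (simp only: sum.lessThan_Suc_shift) simp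
    also have "\<dots> = P 1 + (\<Sum>j<m. (2 * real j + 3) * t^(2*j+2) * P (j+2))"
      by (simp add: numeral_eq_Suc algebra_simps)
    finally show ?thesis .
  qed
  ultimately show ?thesis using Suc by simp
qed




lemma sum3_rot': "(\<Sum>a\<in>A. \<Sum>b\<in>B. \<Sum>c\<in>C. f a b c) = (\<Sum>b\<in>B. \<Sum>c\<in>C. \<Sum>a\<in>A. f a b c)"
proof -
  have "(\<Sum>a\<in>A. \<Sum>b\<in>B. \<Sum>c\<in>C. f a b c) = (\<Sum>b\<in>B. \<Sum>a\<in>A. \<Sum>c\<in>C. f a b c)" by (rule sum.swap)
  also have "\<dots> = (\<Sum>b\<in>B. \<Sum>c\<in>C. \<Sum>a\<in>A. f a b c)" by (rule sum.cong[OF refl], rule sum.swap)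
  finally show ?thesis .
qed

lemma sum4_rot: "(\<Sum>a\<in>A. \<Sum>b\<in>B. \<Sum>d\<in>D. \<Sum>c\<in>C. f a b d c) = (\<Sum>d\<in>D. \<Sum>b\<in>B. \<Sum>c\<in>C. \<Sum>a\<in>A. f a b d c)"
proof -
  have "(\<Sum>a\<in>A. \<Sum>b\<in>B. \<Sum>d\<in>D. \<Sum>c\<in>C. f a b d c) = (\<Sum>b\<in>B. \<Sum>a\<in>A. \<Sum>d\<in>D. \<Sum>c\<in>C. f a b d c)" by (rule sum.swap)
  also have "\<dots> = (\<Sum>b\<in>B. \<Sum>d\<in>D. \<Sum>a\<in>A. \<Sum>c\<in>C. f a b d c)" by (rule sum.cong[OF refl], rule sum.swap)
  also have "\<dots> = (\<Sum>b\<in>B. \<Sum>d\<in>D. \<Sum>c\<in>C. \<Sum>a\<in>A. f a b d c)" by (rule sum.cong[OF refl], rule sum.cong[OF refl], rule sum.swap)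
  also have "\<dots> = (\<Sum>d\<in>D. \<Sum>b\<in>B. \<Sum>c\<in>C. \<Sum>a\<in>A. f a b d c)" by (rule sum.swap)
  finally show ?thesis .
qed

lemma D1_alg:
  fixes P :: "'n::finite \<Rightarrow> 'n \<Rightarrow> real" and L :: "'n \<Rightarrow> real" and Gm :: "'n \<Rightarrow> 'n \<Rightarrow> 'n \<Rightarrow> real"
    and x :: "real^'n" and acc :: "'n \<Rightarrow> real"
  assumes acc: "\<And>a. acc a = - (\<Sum>b\<in>UNIV. \<Sum>c\<in>UNIV. Gm a b c * x$b * x$c)"
  shows "(\<Sum>a\<in>UNIV. L a * acc a + (\<Sum>c\<in>UNIV. P a c * x$c) * x$a)
       = (\<Sum>a\<in>UNIV. \<Sum>b\<in>UNIV. (P a b - (\<Sum>c\<in>UNIV. Gm c a b * L c)) * x$a * x$b)"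
proof -
  have h1: "(\<Sum>a\<in>UNIV. L a * acc a) = - (\<Sum>a\<in>UNIV. \<Sum>b\<in>UNIV. \<Sum>c\<in>UNIV. L a * Gm a b c * x$b * x$c)"
    by (simp add: acc sum_distrib_left sum_negf mult.assoc)
  also have "\<dots> = - (\<Sum>b\<in>UNIV. \<Sum>c\<in>UNIV. \<Sum>a\<in>UNIV. L a * Gm a b c * x$b * x$c)"
    by (rule arg_cong[where f=uminus], rule sum3_rot')
  also have "\<dots> = - (\<Sum>a\<in>UNIV. \<Sum>b\<in>UNIV. (\<Sum>c\<in>UNIV. Gm c a b * L c) * x$a * x$b)"
    by (simp add: sum_distrib_left sum_distrib_right mult_ac)
  finally have h1: "(\<Sum>a\<in>UNIV. L a * acc a) = - (\<Sum>a\<in>UNIV. \<Sum>b\<in>UNIV. (\<Sum>c\<in>UNIV. Gm c a b * L c) * x$a * x$b)" .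
  have h2: "(\<Sum>a\<in>UNIV. (\<Sum>c\<in>UNIV. P a c * x$c) * x$a) = (\<Sum>a\<in>UNIV. \<Sum>b\<in>UNIV. P a b * x$a * x$b)"
    by (simp add: sum_distrib_left sum_distrib_right mult_ac)
  have h3: "(\<Sum>a\<in>UNIV. \<Sum>b\<in>UNIV. (P a b - (\<Sum>c\<in>UNIV. Gm c a b * L c)) * x$a * x$b)
     = (\<Sum>a\<in>UNIV. \<Sum>b\<in>UNIV. P a b * x$a * x$b) - (\<Sum>a\<in>UNIV. \<Sum>b\<in>UNIV. (\<Sum>c\<in>UNIV. Gm c a b * L c) * x$a * x$b)"
    by (simp add: left_diff_distrib sum_subtractf)
  show ?thesis using h1 h2 h3 by (simp add: sum.distrib)
qed

lemma D2_alg: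
  fixes P :: "'n::finite \<Rightarrow> 'n \<Rightarrow> 'n \<Rightarrow> real" and Tq :: "'n \<Rightarrow> 'n \<Rightarrow> real" and Gm :: "'n \<Rightarrow> 'n \<Rightarrow> 'n \<Rightarrow> real"
    and x :: "real^'n" and acc :: "'n \<Rightarrow> real"
  assumes acc: "\<And>a. acc a = - (\<Sum>b\<in>UNIV. \<Sum>c\<in>UNIV. Gm a b c * x$b * x$c)"
  shows "(\<Sum>a\<in>UNIV. \<Sum>b\<in>UNIV. Tq a b * x$a * acc b + (Tq a b * acc a + (\<Sum>c\<in>UNIV. P a b c * x$c) * x$a) * x$b)
       = (\<Sum>a\<in>UNIV. \<Sum>b\<in>UNIV. \<Sum>c\<in>UNIV. (P a b c - (\<Sum>d\<in>UNIV. Gm d a c * Tq d b) - (\<Sum>d\<in>UNIV. Gm d b c * Tq a d)) * x$a * x$b * x$c)"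
proof -
  have EP: "(\<Sum>a\<in>UNIV. \<Sum>b\<in>UNIV. (\<Sum>c\<in>UNIV. P a b c * x$c) * x$a * x$b) = (\<Sum>a\<in>UNIV. \<Sum>b\<in>UNIV. \<Sum>c\<in>UNIV. P a b c * x$a * x$b * x$c)"
    by (simp add: sum_distrib_left sum_distrib_right mult_ac)
  have "(\<Sum>a\<in>UNIV. \<Sum>b\<in>UNIV. Tq a b * x$a * acc b) = - (\<Sum>a\<in>UNIV. \<Sum>b\<in>UNIV. \<Sum>d\<in>UNIV. \<Sum>c\<in>UNIV. Tq a b * x$a * Gm b d c * x$d * x$c)"
    by (simp add: acc sum_distrib_left sum_negf mult.assoc)
  also have "\<dots> = - (\<Sum>a\<in>UNIV. \<Sum>d\<in>UNIV. \<Sum>c\<in>UNIV. \<Sum>b\<in>UNIV. Tq a b * x$a * Gm b d c * x$d * x$c)"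
    by (rule arg_cong[where f=uminus], rule sum.cong[OF refl], rule sum3_rot')
  also have "\<dots> = - (\<Sum>a\<in>UNIV. \<Sum>b\<in>UNIV. \<Sum>c\<in>UNIV. (\<Sum>d\<in>UNIV. Gm d b c * Tq a d) * x$a * x$b * x$c)"
    by (simp add: sum_distrib_left sum_distrib_right mult_ac)
  finally have E1: "(\<Sum>a\<in>UNIV. \<Sum>b\<in>UNIV. Tq a b * x$a * acc b) = - (\<Sum>a\<in>UNIV. \<Sum>b\<in>UNIV. \<Sum>c\<in>UNIV. (\<Sum>d\<in>UNIV. Gm d b c * Tq a d) * x$a * x$b * x$c)" .
  have "(\<Sum>a\<in>UNIV. \<Sum>b\<in>UNIV. Tq a b * acc a * x$b) = - (\<Sum>a\<in>UNIV. \<Sum>b\<in>UNIV. \<Sum>d\<in>UNIV. \<Sum>c\<in>UNIV. Tq a b * Gm a d c * x$d * x$c * x$b)"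
    by (simp add: acc sum_distrib_left sum_distrib_right sum_negf mult.assoc)
  also have "\<dots> = - (\<Sum>d\<in>UNIV. \<Sum>b\<in>UNIV. \<Sum>c\<in>UNIV. \<Sum>a\<in>UNIV. Tq a b * Gm a d c * x$d * x$c * x$b)"
    by (rule arg_cong[where f=uminus], rule sum4_rot)
  also have "\<dots> = - (\<Sum>a\<in>UNIV. \<Sum>b\<in>UNIV. \<Sum>c\<in>UNIV. (\<Sum>d\<in>UNIV. Gm d a c * Tq d b) * x$a * x$b * x$c)"
    by (simp add: sum_distrib_left sum_distrib_right mult_ac)
  finally have E2: "(\<Sum>a\<in>UNIV. \<Sum>b\<in>UNIV. Tq a b * acc a * x$b) = - (\<Sum>a\<in>UNIV. \<Sum>b\<in>UNIV. \<Sum>c\<in>UNIV. (\<Sum>d\<in>UNIV. Gm d a c * Tq d b) * x$a * x$b * x$c)" .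
  have L: "(\<Sum>a\<in>UNIV. \<Sum>b\<in>UNIV. Tq a b * x$a * acc b + (Tq a b * acc a + (\<Sum>c\<in>UNIV. P a b c * x$c) * x$a) * x$b)
     = (\<Sum>a\<in>UNIV. \<Sum>b\<in>UNIV. Tq a b * x$a * acc b) + (\<Sum>a\<in>UNIV. \<Sum>b\<in>UNIV. Tq a b * acc a * x$b)
       + (\<Sum>a\<in>UNIV. \<Sum>b\<in>UNIV. (\<Sum>c\<in>UNIV. P a b c * x$c) * x$a * x$b)"
    by (simp add: sum.distrib distrib_right)
  have R: "(\<Sum>a\<in>UNIV. \<Sum>b\<in>UNIV. \<Sum>c\<in>UNIV. (P a b c - (\<Sum>d\<in>UNIV. Gm d a c * Tq d b) - (\<Sum>d\<in>UNIV. Gm d b c * Tq a d)) * x$a * x$b * x$c)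
     = (\<Sum>a\<in>UNIV. \<Sum>b\<in>UNIV. \<Sum>c\<in>UNIV. P a b c * x$a * x$b * x$c)
       - (\<Sum>a\<in>UNIV. \<Sum>b\<in>UNIV. \<Sum>c\<in>UNIV. (\<Sum>d\<in>UNIV. Gm d a c * Tq d b) * x$a * x$b * x$c)
       - (\<Sum>a\<in>UNIV. \<Sum>b\<in>UNIV. \<Sum>c\<in>UNIV. (\<Sum>d\<in>UNIV. Gm d b c * Tq a d) * x$a * x$b * x$c)"
    by (simp only: left_diff_distrib sum_subtractf)
  show ?thesis unfolding L R E1 E2 EP by simp
qed

lemma D1:
  assumes m: "is_metric U g" and L: "smooth_covec U L" and qU: "q t \<in> U"
    and qd: "(q has_vector_derivative v t) (at t)" and vd: "(v has_vector_derivative acc) (at t)"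
    and geo: "\<And>a. acc $ a + (\<Sum>b\<in>UNIV. \<Sum>c\<in>UNIV. Gamma g (q t) a b c * v t $ b * v t $ c) = 0"
  shows "((\<lambda>s. \<Sum>a\<in>UNIV. L (q s) a * v s $ a) has_real_derivative
           (\<Sum>a\<in>UNIV. \<Sum>b\<in>UNIV. symcov1 g L (q t) a b * v t $ a * v t $ b)) (at t)"
proof -
  have sf: "\<And>a. smooth_fun U (\<lambda>q. L q a)" using L unfolding smooth_covec_def by blast
  have ch: "\<And>a. ((\<lambda>s. L (q s) a) has_real_derivative (\<Sum>c\<in>UNIV. pd (\<lambda>p. L p a) c (q t) * v t$c)) (at t)"
    using pd_chain[OF smooth_fun_diff[OF sf qU] qd] .
  have vc: "\<And>a. ((\<lambda>s. v s $ a) has_real_derivative acc $ a) (at t)" using vec_comp_deriv[OF vd] .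
  have "((\<lambda>s. \<Sum>a\<in>UNIV. L (q s) a * v s $ a) has_real_derivative
      (\<Sum>a\<in>UNIV. L (q t) a * acc $ a + (\<Sum>c\<in>UNIV. pd (\<lambda>p. L p a) c (q t) * v t$c) * v t $ a)) (at t)"
    by (intro DERIV_sum) (rule DERIV_mult'[OF ch vc])
  moreover have "(\<Sum>a\<in>UNIV. L (q t) a * acc $ a + (\<Sum>c\<in>UNIV. pd (\<lambda>p. L p a) c (q t) * v t$c) * v t $ a)
     = (\<Sum>a\<in>UNIV. \<Sum>b\<in>UNIV. cov1 g L (q t) a b * v t $ a * v t $ b)"
  proof -
    have acc: "\<And>a. acc $ a = - (\<Sum>b\<in>UNIV. \<Sum>c\<in>UNIV. Gamma g (q t) a b c * v t $ b * v t $ c)"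
      by (rule eq_neg_iff_add_eq_0[THEN iffD2, OF geo])
    show ?thesis unfolding cov1_def
      using D1_alg[where acc="\<lambda>a. acc $ a" and P="\<lambda>a c. pd (\<lambda>p. L p a) c (q t)" and L="\<lambda>a. L (q t) a"
        and Gm="\<lambda>a b c. Gamma g (q t) a b c" and x="v t", OF acc] by simp
  qed
  ultimately show ?thesis unfolding cov1_sym_contract by (rule DERIV_cong)
qed

lemma D2:
  assumes Td: "\<And>a b. (\<lambda>p. T p a b) differentiable (at (q t))"
    and qd: "(q has_vector_derivative v t) (at t)" and vd: "(v has_vector_derivative acc) (at t)"
    and geo: "\<And>a. acc $ a + (\<Sum>b\<in>UNIV. \<Sum>c\<in>UNIV. Gamma g (q t) a b c * v t $ b * v t $ c) = 0"
  shows "((\<lambda>s. \<Sum>a\<in>UNIV. \<Sum>b\<in>UNIV. T (q s) a b * v s $ a * v s $ b) has_real_derivative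
           (\<Sum>a\<in>UNIV. \<Sum>b\<in>UNIV. \<Sum>c\<in>UNIV. cov2 g T (q t) a b c * v t $ a * v t $ b * v t $ c)) (at t)"
proof -
  have ch: "\<And>a b. ((\<lambda>s. T (q s) a b) has_real_derivative (\<Sum>c\<in>UNIV. pd (\<lambda>p. T p a b) c (q t) * v t$c)) (at t)"
    using pd_chain[OF Td qd] .
  have vc: "\<And>a. ((\<lambda>s. v s $ a) has_real_derivative acc $ a) (at t)" using vec_comp_deriv[OF vd] .
  have "((\<lambda>s. \<Sum>a\<in>UNIV. \<Sum>b\<in>UNIV. T (q s) a b * v s $ a * v s $ b) has_real_derivative
      (\<Sum>a\<in>UNIV. \<Sum>b\<in>UNIV. T (q t) a b * v t $ a * acc $ b + (T (q t) a b * acc $ a + (\<Sum>c\<in>UNIV. pd (\<lambda>p. T p a b) c (q t) * v t$c) * v t $ a) * v t $ b)) (at t)"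
    by (intro DERIV_sum) (rule DERIV_mult'[OF DERIV_mult'[OF ch vc] vc])
  moreover have "(\<Sum>a\<in>UNIV. \<Sum>b\<in>UNIV. T (q t) a b * v t $ a * acc $ b + (T (q t) a b * acc $ a + (\<Sum>c\<in>UNIV. pd (\<lambda>p. T p a b) c (q t) * v t$c) * v t $ a) * v t $ b)
     = (\<Sum>a\<in>UNIV. \<Sum>b\<in>UNIV. \<Sum>c\<in>UNIV. cov2 g T (q t) a b c * v t $ a * v t $ b * v t $ c)"
  proof -
    have acc: "\<And>a. acc $ a = - (\<Sum>b\<in>UNIV. \<Sum>c\<in>UNIV. Gamma g (q t) a b c * v t $ b * v t $ c)"
      by (rule eq_neg_iff_add_eq_0[THEN iffD2, OF geo])
    show ?thesis unfolding cov2_def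
      using D2_alg[where acc="\<lambda>a. acc $ a" and P="\<lambda>a b c. pd (\<lambda>p. T p a b) c (q t)" and Tq="\<lambda>a b. T (q t) a b"
        and Gm="\<lambda>a b c. Gamma g (q t) a b c" and x="v t", OF acc] by simp
  qed
  ultimately show ?thesis by (rule DERIV_cong)
qed




lemma quad_CKT_deriv:
  assumes qd: "(q has_vector_derivative v t) (at t)" and vd: "(v has_vector_derivative acc) (at t)"
    and geo: "\<And>a. acc $ a + (\<Sum>b\<in>UNIV. \<Sum>c\<in>UNIV. Gamma g (q t) a b c * v t $ b * v t $ c) = 0"
    and con: "(\<Sum>a\<in>UNIV. \<Sum>b\<in>UNIV. g (q t) a b * v t $ a * v t $ b) = 2 * E0"
    and qU: "q t \<in> U"
    and Td: "\<And>a b. (\<lambda>p. T p a b) differentiable (at (q t))" and ckt: "is_CKT U g T u"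
  shows "((\<lambda>s. \<Sum>a\<in>UNIV. \<Sum>b\<in>UNIV. T (q s) a b * v s $ a * v s $ b) has_real_derivative
           2 * E0 * (\<Sum>a\<in>UNIV. u (q t) a * v t $ a)) (at t)"
proof (rule DERIV_cong[OF D2[OF Td qd vd geo]])
  show "(\<Sum>a\<in>UNIV. \<Sum>b\<in>UNIV. \<Sum>c\<in>UNIV. cov2 g T (q t) a b c * v t $ a * v t $ b * v t $ c) =
    2 * E0 * (\<Sum>a\<in>UNIV. u (q t) a * v t $ a)"
    using CKT_contract[OF ckt qU, of "v t"] con by simp
qed

lemma int3:
  assumes m: "is_metric U g"
    and hyp: "lam \<noteq> 0 \<and> smooth_covec U L \<and> smooth_covec U Y \<and>
       is_CKT U g (symcov1 g L) Y \<and> (\<forall>q\<in>U. \<forall>a. L q a = 2 * E0 / lam^2 * Y q a)"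
  shows "first_integral U g E0
          (\<lambda>t q v. exp (lam * t) *
              (- (\<Sum>a\<in>UNIV. \<Sum>b\<in>UNIV. symcov1 g L q a b * v $ a * v $ b)
               + lam * (\<Sum>a\<in>UNIV. L q a * v $ a)))"
  unfolding first_integral_def
proof (intro allI impI ballI)
  fix J :: "real set" and q :: "real \<Rightarrow> real^'a" and v acc t
  assume A: "open J \<and> (\<forall>t\<in>J. q t \<in> U \<and> (q has_vector_derivative v t) (at t) \<and>
               (v has_vector_derivative acc t) (at t) \<and>
               (\<forall>a. acc t $ a + (\<Sum>b\<in>UNIV. \<Sum>c\<in>UNIV. Gamma g (q t) a b c * v t $ b * v t $ c) = 0) \<and>
               (\<Sum>a\<in>UNIV. \<Sum>b\<in>UNIV. g (q t) a b * v t $ a * v t $ b) = 2 * E0)"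
    and tJ: "t \<in> J"
  have qU: "q t \<in> U" and qd: "(q has_vector_derivative v t) (at t)" and vd: "(v has_vector_derivative acc t) (at t)"
    and geo: "\<And>a. acc t $ a + (\<Sum>b\<in>UNIV. \<Sum>c\<in>UNIV. Gamma g (q t) a b c * v t $ b * v t $ c) = 0"
    and con: "(\<Sum>a\<in>UNIV. \<Sum>b\<in>UNIV. g (q t) a b * v t $ a * v t $ b) = 2 * E0"
    using A tJ by auto
  have lam: "lam \<noteq> 0" and L: "smooth_covec U L" and ckt: "is_CKT U g (symcov1 g L) Y"
    and LY: "\<And>a. L (q t) a = 2 * E0 / lam^2 * Y (q t) a" using hyp qU by auto
  define S where "S s = (\<Sum>a\<in>UNIV. \<Sum>b\<in>UNIV. symcov1 g L (q s) a b * v s $ a * v s $ b)" for s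
  define P where "P s = (\<Sum>a\<in>UNIV. L (q s) a * v s $ a)" for s
  define Yv where "Yv = (\<Sum>a\<in>UNIV. Y (q t) a * v t $ a)"
  have dS: "(S has_real_derivative 2 * E0 * Yv) (at t)"
    unfolding S_def Yv_def
    by (rule quad_CKT_deriv[OF qd vd geo con qU symcov1_diff[OF m qU L] ckt])
  have dP: "(P has_real_derivative S t) (at t)"
    unfolding S_def P_def by (rule D1[OF m L qU qd vd geo])
  have dE: "((\<lambda>s. exp (lam * s)) has_real_derivative exp (lam * t) * lam) (at t)"
    by (auto intro!: derivative_eq_intros)
  have PY: "P t = 2 * E0 / lam^2 * Yv"
    unfolding P_def Yv_def by (simp add: LY sum_distrib_left mult.assoc)
  have "((\<lambda>s. exp (lam * s) * (- S s + lam * P s)) has_real_derivative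
          exp (lam * t) * (- (2 * E0 * Yv) + lam * S t) + exp (lam * t) * lam * (- S t + lam * P t)) (at t)"
    by (rule DERIV_mult'[OF dE DERIV_add[OF DERIV_minus[OF dS] DERIV_cmult[OF dP]]])
  moreover have "exp (lam * t) * (- (2 * E0 * Yv) + lam * S t) + exp (lam * t) * lam * (- S t + lam * P t) = 0"
    using lam unfolding PY by (simp add: field_simps power2_eq_square)
  ultimately show "((\<lambda>s. exp (lam * s) *
              (- (\<Sum>a\<in>UNIV. \<Sum>b\<in>UNIV. symcov1 g L (q s) a b * v s $ a * v s $ b)
               + lam * (\<Sum>a\<in>UNIV. L (q s) a * v s $ a))) has_real_derivative 0) (at t)"
    unfolding S_def P_def by simp
qed

lemma int2:
  assumes m: "is_metric U g"
    and hyp: "(\<forall>k\<in>{0..l}. smooth_covec U (L (2*k)) \<and> smooth_covec U (Y (2*k))) \<and>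
       (\<forall>k\<in>{0..l}. is_CKT U g (symcov1 g (L (2*k))) (Y (2*k))) \<and>
       (\<forall>q\<in>U. \<forall>a. E0 * Y (2*l) q a = 0) \<and>
       (\<forall>k\<in>{0..<l}. \<forall>q\<in>U. \<forall>a. E0 * Y (2*k) q a = (real k + 1) * (2 * real k + 1) * L (2*k+2) q a)"
  shows "first_integral U g E0
          (\<lambda>t q v. \<Sum>k=0..l.
              - (t^(2*k+1) / (2 * real k + 1)) *
                  (\<Sum>a\<in>UNIV. \<Sum>b\<in>UNIV. symcov1 g (L (2*k)) q a b * v $ a * v $ b)
              + t^(2*k) * (\<Sum>a\<in>UNIV. L (2*k) q a * v $ a))"
  unfolding first_integral_def
proof (intro allI impI ballI)
  fix J :: "real set" and q :: "real \<Rightarrow> real^'a" and v acc t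
  assume A: "open J \<and> (\<forall>t\<in>J. q t \<in> U \<and> (q has_vector_derivative v t) (at t) \<and>
               (v has_vector_derivative acc t) (at t) \<and>
               (\<forall>a. acc t $ a + (\<Sum>b\<in>UNIV. \<Sum>c\<in>UNIV. Gamma g (q t) a b c * v t $ b * v t $ c) = 0) \<and>
               (\<Sum>a\<in>UNIV. \<Sum>b\<in>UNIV. g (q t) a b * v t $ a * v t $ b) = 2 * E0)"
    and tJ: "t \<in> J"
  have qU: "q t \<in> U" and qd: "(q has_vector_derivative v t) (at t)" and vd: "(v has_vector_derivative acc t) (at t)"
    and geo: "\<And>a. acc t $ a + (\<Sum>b\<in>UNIV. \<Sum>c\<in>UNIV. Gamma g (q t) a b c * v t $ b * v t $ c) = 0"
    and con: "(\<Sum>a\<in>UNIV. \<Sum>b\<in>UNIV. g (q t) a b * v t $ a * v t $ b) = 2 * E0"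
    using A tJ by auto
  define S where "S k s = (\<Sum>a\<in>UNIV. \<Sum>b\<in>UNIV. symcov1 g (L (2*k)) (q s) a b * v s $ a * v s $ b)" for k s
  define P where "P k s = (\<Sum>a\<in>UNIV. L (2*k) (q s) a * v s $ a)" for k s
  define Av where "Av k = (\<Sum>a\<in>UNIV. Y (2*k) (q t) a * v t $ a)" for k
  have dS: "((S k) has_real_derivative 2 * E0 * Av k) (at t)" if "k \<in> {0..l}" for k
  proof -
    have L: "smooth_covec U (L (2*k))" and ckt: "is_CKT U g (symcov1 g (L (2*k))) (Y (2*k))"
      using hyp that by auto
    show ?thesis unfolding S_def Av_def
      by (rule quad_CKT_deriv[OF qd vd geo con qU symcov1_diff[OF m qU L] ckt])
  qed
  have dP: "((P k) has_real_derivative S k t) (at t)" if "k \<in> {0..l}" for k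
  proof -
    have L: "smooth_covec U (L (2*k))" using hyp that by auto
    show ?thesis unfolding S_def P_def by (rule D1[OF m L qU qd vd geo])
  qed
  have "((\<lambda>s. \<Sum>k=0..l. - (s^(2*k+1) / (2 * real k + 1)) * S k s + s^(2*k) * P k s) has_real_derivative
     (\<Sum>k=0..l. - (t^(2*k+1) / (2 * real k + 1)) * (2 * E0 * Av k)
            + - (real (2*k+1) * t^(2*k+1 - Suc 0) / (2 * real k + 1)) * S k t
            + (t^(2*k) * S k t + real (2*k) * t^(2*k - Suc 0) * P k t))) (at t)"
    by (rule DERIV_sum, rule DERIV_add[OF DERIV_mult'[OF DERIV_minus[OF DERIV_cdivide[OF DERIV_pow]] dS] DERIV_mult'[OF DERIV_pow dP]])
  moreover have "(\<Sum>k=0..l. - (t^(2*k+1) / (2 * real k + 1)) * (2 * E0 * Av k)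
            + - (real (2*k+1) * t^(2*k+1 - Suc 0) / (2 * real k + 1)) * S k t
            + (t^(2*k) * S k t + real (2*k) * t^(2*k - Suc 0) * P k t)) = 0"
  proof (rule int2_alg)
    have "E0 * Av l = (\<Sum>a\<in>UNIV. E0 * Y (2*l) (q t) a * v t $ a)"
      by (simp add: Av_def sum_distrib_left mult.assoc)
    also have "\<dots> = 0"
    proof -
      have h: "\<And>a. E0 * Y (2*l) (q t) a = 0" using hyp qU by blast
      show ?thesis by (rule sum.neutral) (simp add: h)
    qed
    finally show "E0 * Av l = 0" .
  next
    fix k assume k: "k < l"
    have "E0 * Av k = (\<Sum>a\<in>UNIV. E0 * Y (2*k) (q t) a * v t $ a)"
      by (simp add: Av_def sum_distrib_left mult.assoc)
    also have "\<dots> = (\<Sum>a\<in>UNIV. (real k + 1) * (2 * real k + 1) * L (2*k+2) (q t) a * v t $ a)"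
      using hyp qU k by simp
    also have "\<dots> = (real k + 1) * (2 * real k + 1) * P (k+1) t"
    proof -
      have "2 * (k+1) = 2*k+2" by simp
      then show ?thesis by (simp only: P_def sum_distrib_left mult.assoc)
    qed
    finally show "E0 * Av k = (real k + 1) * (2 * real k + 1) * P (k+1) t" .
  qed
  ultimately show "((\<lambda>s. \<Sum>k=0..l.
              - (s^(2*k+1) / (2 * real k + 1)) *
                  (\<Sum>a\<in>UNIV. \<Sum>b\<in>UNIV. symcov1 g (L (2*k)) (q s) a b * v s $ a * v s $ b)
              + s^(2*k) * (\<Sum>a\<in>UNIV. L (2*k) (q s) a * v s $ a)) has_real_derivative 0) (at t)"
    unfolding S_def P_def by simp
qed

lemma quad_split:
  fixes M :: "'k \<Rightarrow> 'n::finite \<Rightarrow> 'n \<Rightarrow> real" and C :: "'n \<Rightarrow> 'n \<Rightarrow> real" and x :: "real^'n"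
  shows "(\<Sum>a\<in>UNIV. \<Sum>b\<in>UNIV. (- (\<Sum>k\<in>K. c k * M k a b) + C a b) * x$a * x$b)
    = - (\<Sum>k\<in>K. c k * (\<Sum>a\<in>UNIV. \<Sum>b\<in>UNIV. M k a b * x$a * x$b)) + (\<Sum>a\<in>UNIV. \<Sum>b\<in>UNIV. C a b * x$a * x$b)"
proof -
  have e: "(- (\<Sum>k\<in>K. c k * M k a b) + C a b) * x$a * x$b = C a b * x$a * x$b - (\<Sum>k\<in>K. c k * M k a b * x$a * x$b)" for a b
    by (simp add: algebra_simps sum_distrib_right sum_distrib_left)
  have "(\<Sum>a\<in>UNIV. \<Sum>b\<in>UNIV. (- (\<Sum>k\<in>K. c k * M k a b) + C a b) * x$a * x$b)
     = (\<Sum>a\<in>UNIV. \<Sum>b\<in>UNIV. C a b * x$a * x$b) - (\<Sum>a\<in>UNIV. \<Sum>b\<in>UNIV. \<Sum>k\<in>K. c k * M k a b * x$a * x$b)"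
    by (simp only: e sum_subtractf)
  also have "(\<Sum>a\<in>UNIV. \<Sum>b\<in>UNIV. \<Sum>k\<in>K. c k * M k a b * x$a * x$b) = (\<Sum>k\<in>K. \<Sum>a\<in>UNIV. \<Sum>b\<in>UNIV. c k * M k a b * x$a * x$b)"
    by (rule sum3_rot'[symmetric])
  also have "\<dots> = (\<Sum>k\<in>K. c k * (\<Sum>a\<in>UNIV. \<Sum>b\<in>UNIV. M k a b * x$a * x$b))"
    by (simp add: sum_distrib_left mult.assoc)
  finally show ?thesis by simp
qed

lemma int1:
  assumes m: "is_metric U g"
    and hyp: "smooth_tensor2 U C \<and> smooth_covec U X \<and> smooth_fun U G \<and>
       (\<forall>k\<in>{1..l}. smooth_covec U (L (2*k-1)) \<and> smooth_covec U (Y (2*k-1))) \<and>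
       is_CKT U g C X \<and>
       (\<forall>k\<in>{1..l}. is_CKT U g (symcov1 g (L (2*k-1))) (Y (2*k-1))) \<and>
       (l \<ge> 1 \<longrightarrow> (\<forall>q\<in>U. \<forall>a. E0 * Y (2*l-1) q a = 0)) \<and>
       (\<forall>k\<in>{1..<l}. \<forall>q\<in>U. \<forall>a. E0 * Y (2*k-1) q a = real k * (2 * real k + 1) * L (2*k+1) q a) \<and>
       (\<forall>q\<in>U. \<forall>a. pd G a q = - 2 * E0 * X q a - (if l > 0 then L 1 q a else 0))"
  shows "first_integral U g E0
          (\<lambda>t q v. (\<Sum>a\<in>UNIV. \<Sum>b\<in>UNIV.
                (- (\<Sum>k=1..l. t^(2*k) / (2 * real k) * symcov1 g (L (2*k-1)) q a b) + C q a b)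
                * v $ a * v $ b)
             + (\<Sum>k=1..l. t^(2*k-1) * (\<Sum>a\<in>UNIV. L (2*k-1) q a * v $ a))
             + G q)"
  unfolding first_integral_def
proof (intro allI impI ballI)
  fix J :: "real set" and q :: "real \<Rightarrow> real^'a" and v acc t
  assume A: "open J \<and> (\<forall>t\<in>J. q t \<in> U \<and> (q has_vector_derivative v t) (at t) \<and>
               (v has_vector_derivative acc t) (at t) \<and>
               (\<forall>a. acc t $ a + (\<Sum>b\<in>UNIV. \<Sum>c\<in>UNIV. Gamma g (q t) a b c * v t $ b * v t $ c) = 0) \<and>
               (\<Sum>a\<in>UNIV. \<Sum>b\<in>UNIV. g (q t) a b * v t $ a * v t $ b) = 2 * E0)"
    and tJ: "t \<in> J"
  have qU: "q t \<in> U" and qd: "(q has_vector_derivative v t) (at t)" and vd: "(v has_vector_derivative acc t) (at t)"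
    and geo: "\<And>a. acc t $ a + (\<Sum>b\<in>UNIV. \<Sum>c\<in>UNIV. Gamma g (q t) a b c * v t $ b * v t $ c) = 0"
    and con: "(\<Sum>a\<in>UNIV. \<Sum>b\<in>UNIV. g (q t) a b * v t $ a * v t $ b) = 2 * E0"
    using A tJ by auto
  define S where "S k s = (\<Sum>a\<in>UNIV. \<Sum>b\<in>UNIV. symcov1 g (L (2*k-1)) (q s) a b * v s $ a * v s $ b)" for k s
  define P where "P k s = (\<Sum>a\<in>UNIV. L (2*k-1) (q s) a * v s $ a)" for k s
  define Q where "Q s = (\<Sum>a\<in>UNIV. \<Sum>b\<in>UNIV. C (q s) a b * v s $ a * v s $ b)" for s
  define Av where "Av k = (\<Sum>a\<in>UNIV. Y (2*k-1) (q t) a * v t $ a)" for k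
  define Xv where "Xv = (\<Sum>a\<in>UNIV. X (q t) a * v t $ a)"
  have dS: "((S k) has_real_derivative 2 * E0 * Av k) (at t)" if "k \<in> {1..l}" for k
  proof -
    have L: "smooth_covec U (L (2*k-1))" and ckt: "is_CKT U g (symcov1 g (L (2*k-1))) (Y (2*k-1))"
      using hyp that by auto
    show ?thesis unfolding S_def Av_def
      by (rule quad_CKT_deriv[OF qd vd geo con qU symcov1_diff[OF m qU L] ckt])
  qed
  have dP: "((P k) has_real_derivative S k t) (at t)" if "k \<in> {1..l}" for k
  proof -
    have L: "smooth_covec U (L (2*k-1))" using hyp that by auto
    show ?thesis unfolding S_def P_def by (rule D1[OF m L qU qd vd geo])
  qed
  have dQ: "(Q has_real_derivative 2 * E0 * Xv) (at t)"
  proof -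
    have Cd: "\<And>a b. (\<lambda>p. C p a b) differentiable (at (q t))"
      using hyp qU unfolding smooth_tensor2_def by (blast intro: smooth_fun_diff)
    have ckt: "is_CKT U g C X" using hyp by blast
    show ?thesis unfolding Q_def Xv_def
      by (rule quad_CKT_deriv[OF qd vd geo con qU Cd ckt])
  qed
  have dG: "((\<lambda>s. G (q s)) has_real_derivative - 2 * E0 * Xv - (if l > 0 then P 1 t else 0)) (at t)"
  proof -
    have Gd: "G differentiable (at (q t))" using hyp qU by (blast intro: smooth_fun_diff)
    have pG: "\<And>a. pd G a (q t) = - 2 * E0 * X (q t) a - (if l > 0 then L 1 (q t) a else 0)"
      using hyp qU by blast
    have "(\<Sum>c\<in>UNIV. pd G c (q t) * v t $ c) = - 2 * E0 * Xv - (if l > 0 then P 1 t else 0)"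
      unfolding pG Xv_def P_def
      by (cases "l > 0") (simp_all add: left_diff_distrib sum_subtractf sum_distrib_left mult.assoc)
    then show ?thesis using pd_chain[OF Gd qd] by simp
  qed
  have "((\<lambda>s. - (\<Sum>k=1..l. s^(2*k) / (2 * real k) * S k s) + Q s + (\<Sum>k=1..l. s^(2*k-1) * P k s) + G (q s))
     has_real_derivative
     - (\<Sum>k=1..l. t^(2*k) / (2 * real k) * (2 * E0 * Av k) + real (2*k) * t^(2*k - Suc 0) / (2 * real k) * S k t)
     + 2 * E0 * Xv
     + (\<Sum>k=1..l. t^(2*k-1) * S k t + real (2*k-1) * t^(2*k-1 - Suc 0) * P k t)
     + (- 2 * E0 * Xv - (if l > 0 then P 1 t else 0))) (at t)"
    by (rule DERIV_add[OF DERIV_add[OF DERIV_add[OF DERIV_minus[OF DERIV_sum[OF DERIV_mult'[OF DERIV_cdivide[OF DERIV_pow] dS]]] dQ]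
          DERIV_sum[OF DERIV_mult'[OF DERIV_pow dP]]] dG])
  moreover have "- (\<Sum>k=1..l. t^(2*k) / (2 * real k) * (2 * E0 * Av k) + real (2*k) * t^(2*k - Suc 0) / (2 * real k) * S k t)
     + 2 * E0 * Xv
     + (\<Sum>k=1..l. t^(2*k-1) * S k t + real (2*k-1) * t^(2*k-1 - Suc 0) * P k t)
     + (- 2 * E0 * Xv - (if l > 0 then P 1 t else 0)) = 0"
  proof -
    have "- (\<Sum>k=1..l. t^(2*k) / (2 * real k) * (2 * E0 * Av k) + real (2*k) * t^(2*k - Suc 0) / (2 * real k) * S k t)
     + (\<Sum>k=1..l. t^(2*k-1) * S k t + real (2*k-1) * t^(2*k-1 - Suc 0) * P k t)
     - (if l > 0 then P 1 t else 0) = 0"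
    proof (rule int1_alg)
      assume l: "l \<ge> 1"
      have h: "\<And>a. E0 * Y (2*l-1) (q t) a = 0" using hyp qU l by blast
      have "E0 * Av l = (\<Sum>a\<in>UNIV. E0 * Y (2*l-1) (q t) a * v t $ a)"
        by (simp add: Av_def sum_distrib_left mult.assoc)
      also have "\<dots> = 0" by (rule sum.neutral) (metis h mult_zero_left)
      finally show "E0 * Av l = 0" .
    next
      fix k assume k: "k \<in> {1..<l}"
      have h: "\<And>a. E0 * Y (2*k-1) (q t) a = real k * (2 * real k + 1) * L (2*k+1) (q t) a"
        using hyp qU k by blast
      have "E0 * Av k = (\<Sum>a\<in>UNIV. E0 * Y (2*k-1) (q t) a * v t $ a)"
        by (simp add: Av_def sum_distrib_left mult.assoc)
      also have "\<dots> = (\<Sum>a\<in>UNIV. real k * (2 * real k + 1) * L (2*k+1) (q t) a * v t $ a)"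
        by (simp only: h)
      also have "\<dots> = real k * (2 * real k + 1) * P (k+1) t"
      proof -
        have "2 * (k+1) - 1 = 2*k+1" by simp
        then show ?thesis by (simp only: P_def sum_distrib_left mult.assoc)
      qed
      finally show "E0 * Av k = real k * (2 * real k + 1) * P (k+1) t" .
    qed
    then show ?thesis by linarith
  qed
  moreover have "(\<lambda>s. (\<Sum>a\<in>UNIV. \<Sum>b\<in>UNIV.
                (- (\<Sum>k=1..l. s^(2*k) / (2 * real k) * symcov1 g (L (2*k-1)) (q s) a b) + C (q s) a b)
                * v s $ a * v s $ b)
             + (\<Sum>k=1..l. s^(2*k-1) * (\<Sum>a\<in>UNIV. L (2*k-1) (q s) a * v s $ a))
             + G (q s))
     = (\<lambda>s. - (\<Sum>k=1..l. s^(2*k) / (2 * real k) * S k s) + Q s + (\<Sum>k=1..l. s^(2*k-1) * P k s) + G (q s))"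
    unfolding S_def Q_def P_def by (rule ext) (simp only: quad_split)
  ultimately show "((\<lambda>s. (\<Sum>a\<in>UNIV. \<Sum>b\<in>UNIV.
                (- (\<Sum>k=1..l. s^(2*k) / (2 * real k) * symcov1 g (L (2*k-1)) (q s) a b) + C (q s) a b)
                * v s $ a * v s $ b)
             + (\<Sum>k=1..l. s^(2*k-1) * (\<Sum>a\<in>UNIV. L (2*k-1) (q s) a * v s $ a))
             + G (q s)) has_real_derivative 0) (at t)"
    by simp
qed


theorem theorem2:
  fixes U :: "(real^'n) set" and g :: "real^'n \<Rightarrow> 'n \<Rightarrow> 'n \<Rightarrow> real" and E0 :: real
  assumes metric: "is_metric U g"
  shows
   "(\<forall>(l::nat) C X (L::nat \<Rightarrow> real^'n \<Rightarrow> 'n \<Rightarrow> real) Y G.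
       smooth_tensor2 U C \<and> smooth_covec U X \<and> smooth_fun U G \<and>
       (\<forall>k\<in>{1..l}. smooth_covec U (L (2*k-1)) \<and> smooth_covec U (Y (2*k-1))) \<and>
       is_CKT U g C X \<and>
       (\<forall>k\<in>{1..l}. is_CKT U g (symcov1 g (L (2*k-1))) (Y (2*k-1))) \<and>
       (l \<ge> 1 \<longrightarrow> (\<forall>q\<in>U. \<forall>a. E0 * Y (2*l-1) q a = 0)) \<and>
       (\<forall>k\<in>{1..<l}. \<forall>q\<in>U. \<forall>a. E0 * Y (2*k-1) q a = real k * (2 * real k + 1) * L (2*k+1) q a) \<and>
       (\<forall>q\<in>U. \<forall>a. pd G a q = - 2 * E0 * X q a - (if l > 0 then L 1 q a else 0))
     \<longrightarrow> first_integral U g E0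
          (\<lambda>t q v. (\<Sum>a\<in>UNIV. \<Sum>b\<in>UNIV.
                (- (\<Sum>k=1..l. t^(2*k) / (2 * real k) * symcov1 g (L (2*k-1)) q a b) + C q a b)
                * v $ a * v $ b)
             + (\<Sum>k=1..l. t^(2*k-1) * (\<Sum>a\<in>UNIV. L (2*k-1) q a * v $ a))
             + G q)) \<and>
    (\<forall>(l::nat) (L::nat \<Rightarrow> real^'n \<Rightarrow> 'n \<Rightarrow> real) Y.
       (\<forall>k\<in>{0..l}. smooth_covec U (L (2*k)) \<and> smooth_covec U (Y (2*k))) \<and>
       (\<forall>k\<in>{0..l}. is_CKT U g (symcov1 g (L (2*k))) (Y (2*k))) \<and>
       (\<forall>q\<in>U. \<forall>a. E0 * Y (2*l) q a = 0) \<and>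
       (\<forall>k\<in>{0..<l}. \<forall>q\<in>U. \<forall>a. E0 * Y (2*k) q a = (real k + 1) * (2 * real k + 1) * L (2*k+2) q a)
     \<longrightarrow> first_integral U g E0
          (\<lambda>t q v. \<Sum>k=0..l.
              - (t^(2*k+1) / (2 * real k + 1)) *
                  (\<Sum>a\<in>UNIV. \<Sum>b\<in>UNIV. symcov1 g (L (2*k)) q a b * v $ a * v $ b)
              + t^(2*k) * (\<Sum>a\<in>UNIV. L (2*k) q a * v $ a))) \<and>
    (\<forall>(lam::real) (L::real^'n \<Rightarrow> 'n \<Rightarrow> real) Y.
       lam \<noteq> 0 \<and> smooth_covec U L \<and> smooth_covec U Y \<and>
       is_CKT U g (symcov1 g L) Y \<and>
       (\<forall>q\<in>U. \<forall>a. L q a = 2 * E0 / lam^2 * Y q a)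
     \<longrightarrow> first_integral U g E0
          (\<lambda>t q v. exp (lam * t) *
              (- (\<Sum>a\<in>UNIV. \<Sum>b\<in>UNIV. symcov1 g L q a b * v $ a * v $ b)
               + lam * (\<Sum>a\<in>UNIV. L q a * v $ a))))"
    apply (intro conjI allI impI)
    apply (rule int1[OF metric], assumption)
   apply (rule int2[OF metric], assumption)
  apply (rule int3[OF metric], assumption)
  done

end
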